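(* Let $A$ be a real matrix with $m$ rows, let $B$ be a real matrix with $m$ nonzero columns, and let $OPT$ be a set of $k$ columns of $B$ maximizing $f_A$ among all $k$-sets of columns of $B$, with $\sigma_{\min}(OPT) > 0$. Then for any partition $(I, J)$ of $OPT$, $$f_A(I) + f_A(J) \ge \frac{f_A(OPT)}{2\,\kappa(OPT)}.$$
   Context: For a finite set $V$ of vectors in $\mathbb{R}^m$, $\Pi_V$ is the orthogonal projector onto $\mathrm{span}(V)$ and, for a matrix $M$ with $m$ rows, $f_M(V) = \|\Pi_V M\|_F^2$. For a finite set $V$ of nonzero vectors, $\sigma_{\min}(V)$ and $\sigma_{\max}(V)$ are the smallest and largest squared singular values of the matrix whose columns are the vectors of $V$ rescaled to unit length, and $\kappa(V) = \sigma_{\max}(V)/\sigma_{\min}(V)$. *)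

theory Defs
  imports "HOL-Analysis.Analysis"
begin

definition proj_span :: "'a::euclidean_space set \<Rightarrow> 'a \<Rightarrow> 'a" where
  "proj_span V x = (THE p. p \<in> span V \<and> (\<forall>w\<in>span V. (x - p) \<bullet> w = 0))"

definition proj_mat :: "(real^'m) set \<Rightarrow> real^'m^'m" where
  "proj_mat V = matrix (proj_span V)"

definition frob2 :: "real^'n^'m \<Rightarrow> real" where
  "frob2 M = (\<Sum>i\<in>UNIV. \<Sum>j\<in>UNIV. (M $ i $ j)^2)"

definition fM :: "real^'n^'m \<Rightarrow> (real^'m) set \<Rightarrow> real" where
  "fM M V = frob2 (proj_mat V ** M)"

definition cols :: "real^'n^'m \<Rightarrow> (real^'m) set" where
  "cols B = {column j B | j. True}"

text \<open>Squared singular values of the matrix N whose columns are the vectors of V rescaled to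
  unit length (columns indexed by V): the eigenvalues of the Gram matrix N^T N.\<close>
definition sq_sing_vals :: "'a::euclidean_space set \<Rightarrow> real set" where
  "sq_sing_vals V = {lam. \<exists>x::'a \<Rightarrow> real. (\<exists>u\<in>V. x u \<noteq> 0) \<and>
     (\<forall>u\<in>V. (\<Sum>w\<in>V. ((inverse (norm u) *\<^sub>R u) \<bullet> (inverse (norm w) *\<^sub>R w)) * x w) = lam * x u)}"

definition sigma_min :: "'a::euclidean_space set \<Rightarrow> real" where
  "sigma_min V = Min (sq_sing_vals V)"

definition sigma_max :: "'a::euclidean_space set \<Rightarrow> real" where
  "sigma_max V = Max (sq_sing_vals V)"

definition kappa :: "'a::euclidean_space set \<Rightarrow> real" where
  "kappa V = sigma_max V / sigma_min V"

end

theory Submission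
  imports Defs
begin


lemma proj_ex: fixes V :: "'a::euclidean_space set"
  shows "\<exists>!p. p \<in> span V \<and> (\<forall>w\<in>span V. (x - p) \<bullet> w = 0)"
proof -
  obtain y z where yz: "y \<in> span V" "\<And>w. w \<in> span V \<Longrightarrow> orthogonal z w" "x = y + z"
    by (rule orthogonal_subspace_decomp_exists[of V x]) blast
  have xz: "x - y = z" using yz(3) by simp
  have zo: "\<forall>w\<in>span V. z \<bullet> w = 0" using yz(2) unfolding orthogonal_def by blast
  show ?thesis
  proof (rule ex1I[of _ y])
    show "y \<in> span V \<and> (\<forall>w\<in>span V. (x - y) \<bullet> w = 0)"
      using yz(1) zo xz by simp
    fix p assume p: "p \<in> span V \<and> (\<forall>w\<in>span V. (x - p) \<bullet> w = 0)"
    have d: "p - y \<in> span V" using p yz(1) by (simp add: span_diff)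
    have e1: "(x - y) \<bullet> (p - y) = 0" using zo d xz by simp
    have e2: "(x - p) \<bullet> (p - y) = 0" using p d by blast
    have "(p - y) = (x - y) - (x - p)" by simp
    then have "(p - y) \<bullet> (p - y) = (x - y) \<bullet> (p - y) - (x - p) \<bullet> (p - y)"
      by (metis inner_diff_left)
    then have "(p - y) \<bullet> (p - y) = 0" using e1 e2 by simp
    then show "p = y" by simp
  qed
qed

lemma proj_props: fixes V :: "'a::euclidean_space set"
  shows "proj_span V x \<in> span V" "\<And>w. w \<in> span V \<Longrightarrow> (x - proj_span V x) \<bullet> w = 0"
  using theI'[OF proj_ex[of V x]] unfolding proj_span_def by auto

lemma proj_unique: fixes V :: "'a::euclidean_space set"
  assumes "p \<in> span V" "\<And>w. w \<in> span V \<Longrightarrow> (x - p) \<bullet> w = 0"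
  shows "proj_span V x = p"
  using proj_ex[of V x] proj_props(1)[where V=V and x=x] proj_props(2)[where V=V and x=x] assms by blast

lemma proj_linear: fixes V :: "'a::euclidean_space set"
  shows "linear (proj_span V)"
proof (rule linearI)
  fix x y
  have o1: "\<And>w. w \<in> span V \<Longrightarrow> (x - proj_span V x) \<bullet> w = 0"
   and o2: "\<And>w. w \<in> span V \<Longrightarrow> (y - proj_span V y) \<bullet> w = 0" using proj_props(2) by blast+
  show "proj_span V (x + y) = proj_span V x + proj_span V y"
  proof (rule proj_unique)
    show "proj_span V x + proj_span V y \<in> span V" by (simp add: span_add proj_props)
    fix w assume "w \<in> span V"
    then have "(x - proj_span V x) \<bullet> w + (y - proj_span V y) \<bullet> w = 0" using o1 o2 by simp
    then show "(x + y - (proj_span V x + proj_span V y)) \<bullet> w = 0"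
      by (simp add: inner_diff_left inner_add_left)
  qed
next
  fix c::real and x
  have o1: "\<And>w. w \<in> span V \<Longrightarrow> (x - proj_span V x) \<bullet> w = 0" by (rule proj_props)
  show "proj_span V (c *\<^sub>R x) = c *\<^sub>R proj_span V x"
  proof (rule proj_unique)
    show "c *\<^sub>R proj_span V x \<in> span V" by (simp add: span_scale proj_props)
    fix w assume "w \<in> span V"
    then have "c * ((x - proj_span V x) \<bullet> w) = 0" using o1 by simp
    then show "(c *\<^sub>R x - c *\<^sub>R proj_span V x) \<bullet> w = 0"
      by (simp add: inner_diff_left)
  qed
qed

lemma column_mult: "column j (M ** A) = M *v column j A"
  by (simp add: matrix_matrix_mult_def matrix_vector_mult_def column_def vec_eq_iff)

lemma frob2_cols: "frob2 (M::real^'n^'m) = (\<Sum>j\<in>UNIV. (norm (column j M))^2)"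
  unfolding frob2_def power2_norm_eq_inner inner_vec_def column_def
  by (subst sum.swap) (simp add: power2_eq_square)

lemma fM_cols: "fM A V = (\<Sum>j\<in>UNIV. (norm (proj_span V (column j A)))^2)"
  unfolding fM_def frob2_cols column_mult proj_mat_def
  using matrix_vector_mul(2)[OF proj_linear[of V]] by (metis)




definition Qf :: "('a \<Rightarrow> 'a \<Rightarrow> real) \<Rightarrow> 'a set \<Rightarrow> ('a \<Rightarrow> real) \<Rightarrow> real" where
  "Qf G V c = (\<Sum>u\<in>V. \<Sum>w\<in>V. c u * c w * G u w)"
definition nsq :: "'a set \<Rightarrow> ('a \<Rightarrow> real) \<Rightarrow> real" where
  "nsq V c = (\<Sum>u\<in>V. (c u)^2)"

lemma Qf_expand:
  assumes sym: "\<And>u w. u \<in> V \<Longrightarrow> w \<in> V \<Longrightarrow> G u w = G w u"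
  shows "Qf G V (\<lambda>u. c u + t * d u) = Qf G V c + 2 * t * (\<Sum>u\<in>V. d u * (\<Sum>w\<in>V. G u w * c w)) + t^2 * Qf G V d"
proof -
  have h1: "(\<Sum>u\<in>V. \<Sum>w\<in>V. c u * d w * G u w) = (\<Sum>u\<in>V. d u * (\<Sum>w\<in>V. G u w * c w))"
  proof -
    have "(\<Sum>u\<in>V. \<Sum>w\<in>V. c u * d w * G u w) = (\<Sum>w\<in>V. \<Sum>u\<in>V. c u * d w * G u w)"
      by (rule sum.swap)
    also have "\<dots> = (\<Sum>w\<in>V. d w * (\<Sum>u\<in>V. G w u * c u))"
      by (auto simp: sum_distrib_left sym mult_ac intro!: sum.cong)
    finally show ?thesis .
  qed
  have h2: "(\<Sum>u\<in>V. \<Sum>w\<in>V. d u * c w * G u w) = (\<Sum>u\<in>V. d u * (\<Sum>w\<in>V. G u w * c w))"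
    by (auto simp: sum_distrib_left mult_ac intro!: sum.cong)
  have "Qf G V (\<lambda>u. c u + t * d u) = (\<Sum>u\<in>V. \<Sum>w\<in>V. c u * c w * G u w + t * (c u * d w * G u w) + t * (d u * c w * G u w) + t^2 * (d u * d w * G u w))"
    unfolding Qf_def by (auto simp: algebra_simps power2_eq_square intro!: sum.cong)
  also have "\<dots> = Qf G V c + t * (\<Sum>u\<in>V. \<Sum>w\<in>V. c u * d w * G u w) + t * (\<Sum>u\<in>V. \<Sum>w\<in>V. d u * c w * G u w) + t^2 * Qf G V d"
    unfolding Qf_def by (simp add: sum.distrib sum_distrib_left)
  finally show ?thesis using h1 h2 by simp
qed

lemma nsq_expand: "nsq V (\<lambda>u. c u + t * d u) = nsq V c + 2 * t * (\<Sum>u\<in>V. d u * c u) + t^2 * nsq V d"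
  unfolding nsq_def by (simp add: power2_eq_square algebra_simps sum.distrib sum_distrib_left)

lemma eig_from_max:
  assumes sym: "\<And>u w. u \<in> V \<Longrightarrow> w \<in> V \<Longrightarrow> G u w = G w u"
    and le: "\<And>d. Qf G V d \<le> mu * nsq V d"
    and eq: "Qf G V c = mu * nsq V c"
    and u: "u \<in> V" and fin: "finite V"
  shows "(\<Sum>w\<in>V. G u w * c w) = mu * c u"
proof -
  define r where "r u = (\<Sum>w\<in>V. G u w * c w) - mu * c u" for u
  define al where "al = (\<Sum>u\<in>V. (r u)^2)"
  define be where "be = Qf G V r - mu * nsq V r"
  define S1 where "S1 = (\<Sum>u\<in>V. r u * (\<Sum>w\<in>V. G u w * c w))"
  define S2 where "S2 = (\<Sum>u\<in>V. r u * c u)"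
  have alS: "al = S1 - mu * S2"
  proof -
    have "al = (\<Sum>u\<in>V. r u * (\<Sum>w\<in>V. G u w * c w) - mu * (r u * c u))"
      unfolding al_def by (rule sum.cong) (simp_all add: power2_eq_square r_def right_diff_distrib)
    also have "\<dots> = S1 - mu * S2" unfolding S1_def S2_def by (simp add: sum_subtractf sum_distrib_left)
    finally show ?thesis .
  qed
  have key: "2 * t * al + t^2 * be \<le> 0" for t
  proof -
    have "Qf G V (\<lambda>u. c u + t * r u) \<le> mu * nsq V (\<lambda>u. c u + t * r u)" by (rule le)
    moreover have "Qf G V (\<lambda>u. c u + t * r u) = Qf G V c + 2 * t * S1 + t^2 * Qf G V r"
      unfolding S1_def by (rule Qf_expand[OF sym])
    moreover have "mu * nsq V (\<lambda>u. c u + t * r u) = mu * nsq V c + 2 * t * (mu * S2) + t^2 * (mu * nsq V r)"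
      unfolding S2_def nsq_expand by (simp add: distrib_left mult_ac)
    moreover have "2 * t * al = 2 * t * S1 - 2 * t * (mu * S2)" by (simp add: alS right_diff_distrib)
    moreover have "t^2 * be = t^2 * Qf G V r - t^2 * (mu * nsq V r)" by (simp add: be_def right_diff_distrib)
    ultimately show ?thesis using eq by linarith
  qed
  have al0: "al \<ge> 0" unfolding al_def by (simp add: sum_nonneg)
  have "al = 0"
  proof (rule ccontr)
    assume "al \<noteq> 0" then have ap: "al > 0" using al0 by simp
    define t where "t = al / (\<bar>be\<bar> + 1)"
    have tp: "t > 0" using ap by (simp add: t_def)
    have "t * \<bar>be\<bar> < al" using ap unfolding t_def
      by (simp add: field_simps)
    then have "t * (t * \<bar>be\<bar>) < t * al" using tp by simp
    moreover have "t^2 * be \<ge> t^2 * (- \<bar>be\<bar>)" by (rule mult_left_mono) auto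
    moreover have "t^2 * (- \<bar>be\<bar>) = - (t * (t * \<bar>be\<bar>))" by (simp add: power2_eq_square)
    moreover have "t * al > 0" using tp ap by simp
    ultimately have "2 * t * al + t^2 * be > 0" by linarith
    with key[of t] show False by simp
  qed
  then have "r u = 0" using u unfolding al_def
    using sum_nonneg_eq_0_iff[OF fin, of "\<lambda>u. (r u)^2"] by simp
  then show ?thesis unfolding r_def by simp
qed




definition emb :: "('a \<Rightarrow> 'p::finite) \<Rightarrow> 'a set \<Rightarrow> ('a \<Rightarrow> real) \<Rightarrow> real^'p" where
 "emb g V x = (\<chi> j. if j \<in> g ` V then x (inv_into V g j) else 0)"

lemma emb_nth: "inj_on g V \<Longrightarrow> u \<in> V \<Longrightarrow> emb g V x $ g u = x u"
  by (simp add: emb_def)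

lemma emb_inner: assumes inj: "inj_on g V"
  shows "emb g V x \<bullet> emb g V y = (\<Sum>u\<in>V. x u * y u)"
proof -
  have "emb g V x \<bullet> emb g V y = (\<Sum>j\<in>UNIV. emb g V x $ j * emb g V y $ j)"
    by (simp add: inner_vec_def)
  also have "\<dots> = (\<Sum>j\<in>g ` V. emb g V x $ j * emb g V y $ j)"
    by (rule sum.mono_neutral_right) (auto simp: emb_def)
  also have "\<dots> = (\<Sum>u\<in>V. x u * y u)"
    by (simp add: sum.reindex[OF inj] emb_nth[OF inj])
  finally show ?thesis .
qed

lemma fin_of_inj: "inj_on (g::'a \<Rightarrow> 'p::finite) V \<Longrightarrow> finite V"
  using finite_image_iff by (metis finite)

lemma Qf_cong: "(\<And>u. u \<in> V \<Longrightarrow> c u = c' u) \<Longrightarrow> Qf G V c = Qf G V c'"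
  unfolding Qf_def by simp

lemma Qf_scale: "Qf G V (\<lambda>u. d u / s) = Qf G V d / s^2"
  unfolding Qf_def by (simp add: sum_divide_distrib power2_eq_square)

lemma nsq_scale: "nsq V (\<lambda>u. d u / s) = nsq V d / s^2"
  unfolding nsq_def by (simp add: sum_divide_distrib power_divide)

lemma exists_max:
  fixes g :: "'a \<Rightarrow> 'p::finite"
  assumes inj: "inj_on g V" and ne: "V \<noteq> {}"
  shows "\<exists>c. nsq V c = 1 \<and> (\<forall>d. Qf G V d \<le> Qf G V c * nsq V d)"
proof -
  have finV: "finite V" using fin_of_inj[OF inj] .
  define K where "K = sphere (0::real^'p) 1 \<inter> (\<Inter>j\<in>-(g`V). {y. y$j = 0})"
  have "closed (\<Inter>j\<in>-(g`V). {y::real^'p. y$j = 0})"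
    by (intro closed_INT ballI closed_Collect_eq continuous_intros)
  then have cK: "compact K" unfolding K_def by (intro compact_Int_closed) auto
  obtain u0 where u0: "u0 \<in> V" using ne by auto
  have "axis (g u0) 1 \<in> K" using u0 unfolding K_def by (auto simp: axis_def[symmetric]) (auto simp: axis_def)
  then have neK: "K \<noteq> {}" by auto
  define F where "F y = Qf G V (\<lambda>u. y $ g u)" for y :: "real^'p"
  have "continuous_on K F" unfolding F_def Qf_def by (intro continuous_intros)
  then obtain y0 where y0: "y0 \<in> K" "\<And>y. y \<in> K \<Longrightarrow> F y \<le> F y0"
    using continuous_attains_sup[OF cK neK] by blast
  define c where "c u = y0 $ g u" for u
  have y0e: "y0 = emb g V c"
    using y0(1) unfolding vec_eq_iff emb_def c_def K_def
    by (auto simp: f_inv_into_f)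
  have nc: "nsq V c = 1"
  proof -
    have "nsq V c = emb g V c \<bullet> emb g V c" by (simp add: emb_inner[OF inj] nsq_def power2_eq_square)
    also have "\<dots> = (norm y0)^2" using y0e by (simp add: power2_norm_eq_inner)
    also have "\<dots> = 1" using y0(1) by (simp add: K_def)
    finally show ?thesis .
  qed
  have Fc: "F y0 = Qf G V c" unfolding F_def c_def ..
  show ?thesis
  proof (intro exI conjI allI)
    show "nsq V c = 1" by (rule nc)
    fix d
    show "Qf G V d \<le> Qf G V c * nsq V d"
    proof (cases "nsq V d = 0")
      case True
      then have "\<forall>u\<in>V. (d u)^2 = 0" unfolding nsq_def
        using sum_nonneg_eq_0_iff[OF finV, of "\<lambda>u. (d u)^2"] by simp
      then have "Qf G V d = 0" unfolding Qf_def by simp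
      then show ?thesis using True by simp
    next
      case False
      have nn: "nsq V d \<ge> 0" unfolding nsq_def by (simp add: sum_nonneg)
      define s where "s = sqrt (nsq V d)"
      have s2: "s^2 = nsq V d" using nn by (simp add: s_def)
      have sp: "s > 0" using nn False by (simp add: s_def)
      define e where "e u = d u / s" for u
      define y where "y = emb g V e"
      have "y \<bullet> y = 1" unfolding y_def emb_inner[OF inj]
        using nsq_scale[of V d s] s2 False by (simp add: e_def nsq_def power2_eq_square)
      then have "norm y = 1" by (simp add: norm_eq_1)
      moreover have "\<forall>j\<in>-(g`V). y $ j = 0" by (simp add: y_def emb_def)
      ultimately have "y \<in> K" unfolding K_def by auto
      then have "F y \<le> F y0" by (rule y0(2))
      moreover have "F y = Qf G V d / s^2" unfolding F_def y_def
        by (subst Qf_cong[where c'=e]) (auto simp: emb_nth[OF inj] e_def[abs_def] Qf_scale)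
      ultimately have "Qf G V d / s^2 \<le> Qf G V c" using Fc by simp
      then show ?thesis using s2 sp nn False by (simp add: divide_le_eq mult.commute)
    qed
  qed
qed




definition eigs :: "('a \<Rightarrow> 'a \<Rightarrow> real) \<Rightarrow> 'a set \<Rightarrow> real set" where
  "eigs G V = {lam. \<exists>x. (\<exists>u\<in>V. x u \<noteq> 0) \<and> (\<forall>u\<in>V. (\<Sum>w\<in>V. G u w * x w) = lam * x u)}"

lemma eig_orth:
  fixes G :: "'a \<Rightarrow> 'a \<Rightarrow> real"
  assumes sym: "\<And>u w. u \<in> V \<Longrightarrow> w \<in> V \<Longrightarrow> G u w = G w u"
    and x: "\<forall>u\<in>V. (\<Sum>w\<in>V. G u w * x w) = lam * x u"
    and y: "\<forall>u\<in>V. (\<Sum>w\<in>V. G u w * y w) = mu * y u"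
    and ne: "lam \<noteq> mu"
  shows "(\<Sum>u\<in>V. x u * y u) = 0"
proof -
  have "lam * (\<Sum>u\<in>V. x u * y u) = (\<Sum>u\<in>V. (lam * x u) * y u)"
    by (simp add: sum_distrib_left algebra_simps)
  also have "\<dots> = (\<Sum>u\<in>V. (\<Sum>w\<in>V. G u w * x w) * y u)"
    using x by simp
  also have "\<dots> = (\<Sum>u\<in>V. \<Sum>w\<in>V. G u w * x w * y u)" by (simp add: sum_distrib_right)
  also have "\<dots> = (\<Sum>w\<in>V. \<Sum>u\<in>V. G u w * x w * y u)" by (rule sum.swap)
  also have "\<dots> = (\<Sum>w\<in>V. x w * (\<Sum>u\<in>V. G w u * y u))"
    by (auto simp: sum_distrib_left sym mult_ac intro!: sum.cong)
  also have "\<dots> = (\<Sum>w\<in>V. x w * (mu * y w))"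
    using y by simp
  also have "\<dots> = mu * (\<Sum>u\<in>V. x u * y u)"
    by (simp add: sum_distrib_left mult_ac)
  finally show ?thesis using ne by simp
qed

lemma eigs_finite:
  fixes g :: "'a \<Rightarrow> 'p::finite"
  assumes inj: "inj_on g V"
    and sym: "\<And>u w. u \<in> V \<Longrightarrow> w \<in> V \<Longrightarrow> G u w = G w u"
  shows "finite (eigs G V)"
proof (rule ccontr)
  assume inf: "infinite (eigs G V)"
  obtain T where T: "T \<subseteq> eigs G V" "finite T" "card T = DIM(real^'p) + 1"
    using infinite_arbitrarily_large[OF inf] by blast
  define xs where "xs lam = (SOME x. (\<exists>u\<in>V. x u \<noteq> 0) \<and> (\<forall>u\<in>V. (\<Sum>w\<in>V. G u w * x w) = lam * x u))" for lam
  have xs: "(\<exists>u\<in>V. xs lam u \<noteq> 0) \<and> (\<forall>u\<in>V. (\<Sum>w\<in>V. G u w * xs lam w) = lam * xs lam u)"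
    if "lam \<in> eigs G V" for lam
    unfolding xs_def using that unfolding eigs_def mem_Collect_eq by (rule someI_ex)
  define E where "E lam = emb g V (xs lam)" for lam
  have nz: "E lam \<noteq> 0" if lamT: "lam \<in> T" for lam
  proof -
    obtain u where "u \<in> V" "xs lam u \<noteq> 0" using xs[of lam] lamT T(1) by blast
    then have "E lam $ g u \<noteq> 0" by (simp add: E_def emb_nth[OF inj])
    then show ?thesis by auto
  qed
  have orth: "E l1 \<bullet> E l2 = 0" if "l1 \<in> T" "l2 \<in> T" "l1 \<noteq> l2" for l1 l2
    unfolding E_def emb_inner[OF inj]
    by (rule eig_orth[OF sym]) (use xs that T(1) in blast)+
  have injE: "inj_on E T"
  proof (rule inj_onI, rule ccontr)
    fix l1 l2 assume a: "l1 \<in> T" "l2 \<in> T" "E l1 = E l2" "l1 \<noteq> l2"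
    then have "E l1 \<bullet> E l1 = 0" using orth by metis
    then show False using nz a(1) by simp
  qed
  have "independent (E ` T)"
  proof (rule pairwise_orthogonal_independent)
    show "0 \<notin> E ` T" using nz by fastforce
    show "pairwise orthogonal (E ` T)" by (auto simp: pairwise_def orthogonal_def intro: orth)
  qed
  then have "card (E ` T) \<le> DIM(real^'p)" using independent_bound by blast
  then show False using card_image[OF injE] T(3) by simp
qed

lemma nsq_nonneg: "nsq V c \<ge> 0" unfolding nsq_def by (simp add: sum_nonneg)

lemma nsq_one_nz: "nsq V c = 1 \<Longrightarrow> \<exists>u\<in>V. c u \<noteq> 0"
  unfolding nsq_def by (metis (mono_tags, lifting) power2_eq_square mult_zero_left sum.neutral zero_neq_one)

lemma rayleigh:
  fixes g :: "'a \<Rightarrow> 'p::finite"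
  assumes inj: "inj_on g V"
    and sym: "\<And>u w. u \<in> V \<Longrightarrow> w \<in> V \<Longrightarrow> G u w = G w u"
    and ne: "V \<noteq> {}"
  shows "finite (eigs G V)" "eigs G V \<noteq> {}" "\<And>c. Min (eigs G V) * nsq V c \<le> Qf G V c"
    "\<And>c. Qf G V c \<le> Max (eigs G V) * nsq V c"
proof -
  have finV: "finite V" by (rule fin_of_inj[OF inj])
  show fe: "finite (eigs G V)" by (rule eigs_finite[OF inj sym])
  obtain c where c: "nsq V c = 1" "\<And>d. Qf G V d \<le> Qf G V c * nsq V d"
    using exists_max[OF inj ne, of G] by blast
  have "\<forall>u\<in>V. (\<Sum>w\<in>V. G u w * c w) = Qf G V c * c u"
    using eig_from_max[OF sym c(2), of c] c(1) finV by simp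
  then have mu: "Qf G V c \<in> eigs G V" unfolding eigs_def using nsq_one_nz[OF c(1)] by blast
  then show "eigs G V \<noteq> {}" by auto
  show "Qf G V d \<le> Max (eigs G V) * nsq V d" for d
  proof -
    have "Qf G V c \<le> Max (eigs G V)" using Max_ge[OF fe mu] .
    then have "Qf G V c * nsq V d \<le> Max (eigs G V) * nsq V d" by (rule mult_right_mono[OF _ nsq_nonneg])
    then show ?thesis using c(2)[of d] by linarith
  qed
  define G' where "G' u w = - G u w" for u w
  have QG': "Qf G' V d = - Qf G V d" for d unfolding Qf_def G'_def by (simp add: sum_negf)
  have sym': "\<And>u w. u \<in> V \<Longrightarrow> w \<in> V \<Longrightarrow> G' u w = G' w u" using sym by (simp add: G'_def)
  obtain e where e: "nsq V e = 1" "\<And>d. Qf G' V d \<le> Qf G' V e * nsq V d"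
    using exists_max[OF inj ne, of G'] by blast
  have "\<forall>u\<in>V. (\<Sum>w\<in>V. G' u w * e w) = Qf G' V e * e u"
    using eig_from_max[OF sym' e(2), of e] e(1) finV by simp
  then have "\<forall>u\<in>V. (\<Sum>w\<in>V. G u w * e w) = Qf G V e * e u"
    unfolding QG' G'_def by (simp add: sum_negf)
  then have nu: "Qf G V e \<in> eigs G V" unfolding eigs_def using nsq_one_nz[OF e(1)] by blast
  show "Min (eigs G V) * nsq V d \<le> Qf G V d" for d
  proof -
    have "Min (eigs G V) \<le> Qf G V e" using Min_le[OF fe nu] .
    then have "Min (eigs G V) * nsq V d \<le> Qf G V e * nsq V d" by (rule mult_right_mono[OF _ nsq_nonneg])
    moreover have "Qf G V e * nsq V d \<le> Qf G V d" using e(2)[of d] unfolding QG' by simp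
    ultimately show ?thesis by linarith
  qed
qed




definition nrm :: "'a::real_normed_vector \<Rightarrow> 'a" where "nrm u = inverse (norm u) *\<^sub>R u"

definition Gr :: "'a::real_inner \<Rightarrow> 'a \<Rightarrow> real" where "Gr u w = nrm u \<bullet> nrm w"

lemma ssv_eigs: "sq_sing_vals V = eigs Gr V"
  by (simp add: sq_sing_vals_def eigs_def nrm_def Gr_def)

lemma Gr_sym: "Gr u w = Gr w u" by (simp add: Gr_def inner_commute)

lemma Qf_Gr: "Qf Gr V c = (norm (\<Sum>v\<in>V. c v *\<^sub>R nrm v))^2"
  unfolding Qf_def power2_norm_eq_inner inner_sum_left inner_sum_right Gr_def
  by (simp add: sum_distrib_left mult_ac inner_commute)

lemma nrm_span: "v \<in> V \<Longrightarrow> nrm v \<in> span V"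
  unfolding nrm_def by (simp add: span_base span_scale)

lemma proj_inner_nrm: fixes V :: "'a::euclidean_space set"
  assumes "v \<in> V" shows "a \<bullet> nrm v = proj_span V a \<bullet> nrm v"
proof -
  have "(a - proj_span V a) \<bullet> nrm v = 0" using proj_props(2) nrm_span[OF assms] by blast
  then show ?thesis by (simp add: inner_diff_left)
qed

lemma lowerL: fixes V :: "'a::euclidean_space set"
  assumes fin: "finite V" and nz: "0 \<notin> V" and sp: "\<sigma> > 0"
    and ray: "\<And>c. \<sigma> * nsq V c \<le> Qf Gr V c"
  shows "\<sigma> * (norm (proj_span V a))^2 \<le> (\<Sum>u\<in>V. (a \<bullet> nrm u)^2)"
proof -
  define b where "b = proj_span V a"
  have "b \<in> span V" unfolding b_def by (rule proj_props)
  then have "b \<in> range (\<lambda>k. \<Sum>v\<in>V. k v *\<^sub>R v)" using span_finite[OF fin] by simp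
  then obtain k where k: "b = (\<Sum>v\<in>V. k v *\<^sub>R v)" by blast
  define c where "c v = k v * norm v" for v
  have bc: "b = (\<Sum>v\<in>V. c v *\<^sub>R nrm v)" unfolding k c_def nrm_def
    by (rule sum.cong) (use nz in auto)
  define T where "T = (\<Sum>u\<in>V. (b \<bullet> nrm u)^2)"
  have T: "T = (\<Sum>u\<in>V. (a \<bullet> nrm u)^2)" unfolding T_def b_def
    by (rule sum.cong) (simp_all add: proj_inner_nrm[symmetric])
  define X where "X = (norm b)^2"
  have "X = b \<bullet> (\<Sum>v\<in>V. c v *\<^sub>R nrm v)" unfolding X_def power2_norm_eq_inner using bc by simp
  also have "\<dots> = (\<Sum>v\<in>V. c v * (b \<bullet> nrm v))" by (simp add: inner_sum_right)
  finally have X1: "X = (\<Sum>v\<in>V. c v * (b \<bullet> nrm v))" .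
  have CS: "X^2 \<le> nsq V c * T" unfolding X1 nsq_def T_def by (rule Cauchy_Schwarz_ineq_sum)
  have SX: "\<sigma> * nsq V c \<le> X" using ray[of c] unfolding Qf_Gr X_def bc[symmetric] .
  have T0: "T \<ge> 0" unfolding T_def by (simp add: sum_nonneg)
  have X0: "X \<ge> 0" unfolding X_def by simp
  have "\<sigma> * X \<le> T"
  proof (cases "X = 0")
    case True then show ?thesis using T0 by simp
  next
    case False
    then have Xp: "X > 0" using X0 by simp
    have "\<sigma> * X^2 \<le> \<sigma> * (nsq V c * T)" using CS sp by simp
    also have "\<dots> = (\<sigma> * nsq V c) * T" by simp
    also have "\<dots> \<le> X * T" using SX T0 by (rule mult_right_mono)
    finally have "X * (\<sigma> * X) \<le> X * T" by (simp add: power2_eq_square mult_ac)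
    then show ?thesis using Xp by simp
  qed
  then show ?thesis unfolding X_def b_def T by simp
qed

lemma upperU: fixes V :: "'a::euclidean_space set"
  assumes fin: "finite V" and WV: "W \<subseteq> V" and Mp: "M > 0"
    and ray: "\<And>c. Qf Gr V c \<le> M * nsq V c"
  shows "(\<Sum>u\<in>W. (a \<bullet> nrm u)^2) \<le> M * (norm (proj_span W a))^2"
proof -
  define b where "b = proj_span W a"
  define y where "y u = (if u \<in> W then b \<bullet> nrm u else 0)" for u
  define s where "s = (\<Sum>u\<in>W. (b \<bullet> nrm u)^2)"
  have s: "s = (\<Sum>u\<in>W. (a \<bullet> nrm u)^2)" unfolding s_def b_def
    by (rule sum.cong) (simp_all add: proj_inner_nrm[symmetric])
  have finW: "finite W" using fin WV finite_subset by blast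
  have ns: "nsq V y = s" unfolding nsq_def s_def y_def
    by (simp add: if_distrib[of "\<lambda>x. x^2"] sum.If_cases[OF fin] Int_absorb1[OF WV])
  define L where "L = (\<Sum>v\<in>V. y v *\<^sub>R nrm v)"
  have bL: "b \<bullet> L = s"
  proof -
    have "b \<bullet> L = (\<Sum>v\<in>V. y v * (b \<bullet> nrm v))" unfolding L_def by (simp add: inner_sum_right)
    also have "\<dots> = (\<Sum>v\<in>V. if v \<in> W then (b \<bullet> nrm v)^2 else 0)"
      by (rule sum.cong) (simp_all add: y_def power2_eq_square)
    also have "\<dots> = s" unfolding s_def
      using sum.inter_restrict[OF fin, of "\<lambda>v. (b \<bullet> nrm v)^2" W] Int_absorb1[OF WV] by simp
    finally show ?thesis .
  qed
  have s0: "s \<ge> 0" unfolding s_def by (simp add: sum_nonneg)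
  have "s \<le> norm b * norm L" using bL Cauchy_Schwarz_ineq2[of b L] by simp
  then have "s^2 \<le> (norm b * norm L)^2" using s0 by (simp add: power_mono)
  also have "\<dots> = (norm b)^2 * Qf Gr V y" unfolding Qf_Gr L_def by (simp add: power_mult_distrib)
  also have "\<dots> \<le> (norm b)^2 * (M * s)" using ray[of y] ns by (simp add: mult_left_mono)
  finally have s2: "s * s \<le> s * (M * (norm b)^2)" by (simp add: power2_eq_square mult_ac)
  have "s \<le> M * (norm b)^2"
  proof (cases "s = 0")
    case True then show ?thesis using Mp by simp
  next
    case False then show ?thesis using s2 s0 by simp
  qed
  then show ?thesis using s b_def by simp
qed




lemma fM_nonneg: "fM A V \<ge> 0" unfolding fM_cols by (simp add: sum_nonneg)

theorem lemma4:
  fixes A :: "real^'n^'m" and B :: "real^'p^'m" and OPT I J :: "(real^'m) set" and k :: nat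
  assumes nonzero: "\<forall>j. column j B \<noteq> 0"
    and OPT_sub: "OPT \<subseteq> cols B" and OPT_card: "card OPT = k"
    and OPT_max: "\<forall>S. S \<subseteq> cols B \<and> card S = k \<longrightarrow> fM A S \<le> fM A OPT"
    and sig_pos: "sigma_min OPT > 0"
    and part: "I \<union> J = OPT" "I \<inter> J = {}"
  shows "fM A I + fM A J \<ge> fM A OPT / (2 * kappa OPT)"
proof (cases "OPT = {}")
  case True
  have "fM A OPT = 0" unfolding fM_cols True
    using proj_props(1)[where V="{}::(real^'m) set"] by simp
  then show ?thesis using fM_nonneg[of A I] fM_nonneg[of A J] by simp
next
  case ne: False
  have colsB: "cols B = range (\<lambda>j. column j B)" unfolding cols_def by auto
  have "finite (cols B)" unfolding colsB by simp
  then have fin: "finite OPT" using OPT_sub by (rule finite_subset[rotated])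
  have ex: "\<exists>j. column j B = u" if "u \<in> OPT" for u
    using that OPT_sub unfolding cols_def by blast
  have nz: "0 \<notin> OPT"
  proof
    assume "0 \<in> OPT"
    then obtain j where "column j B = 0" using ex by blast
    then show False using nonzero by blast
  qed
  define g where "g u = (SOME j. column j B = u)" for u
  have gc: "column (g u) B = u" if "u \<in> OPT" for u
    unfolding g_def using ex[OF that] by (rule someI_ex)
  have inj: "inj_on g OPT"
  proof (rule inj_onI)
    fix u v assume "u \<in> OPT" "v \<in> OPT" "g u = g v"
    then show "u = v" using gc by metis
  qed
  note R = rayleigh[OF inj Gr_sym ne]
  define \<sigma> where "\<sigma> = Min (eigs Gr OPT)"
  define M where "M = Max (eigs Gr OPT)"
  have sp: "\<sigma> > 0" using sig_pos unfolding \<sigma>_def sigma_min_def ssv_eigs .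
  have "\<sigma> \<le> M" unfolding \<sigma>_def M_def using Min_le[OF R(1) Max_in[OF R(1) R(2)]] .
  then have Mp: "M > 0" using sp by simp
  have kap: "kappa OPT = M / \<sigma>" unfolding kappa_def sigma_max_def sigma_min_def ssv_eigs M_def \<sigma>_def ..
  have IO: "I \<subseteq> OPT" "J \<subseteq> OPT" using part by auto
  have finI: "finite I" "finite J" using fin IO finite_subset by blast+
  have R3: "\<And>c. \<sigma> * nsq OPT c \<le> Qf Gr OPT c" using R(3) unfolding \<sigma>_def .
  have R4: "\<And>c. Qf Gr OPT c \<le> M * nsq OPT c" using R(4) unfolding M_def .
  have col: "\<sigma> * (norm (proj_span OPT a))^2 \<le> M * (norm (proj_span I a))^2 + M * (norm (proj_span J a))^2" for a
  proof -
    have "\<sigma> * (norm (proj_span OPT a))^2 \<le> (\<Sum>u\<in>OPT. (a \<bullet> nrm u)^2)"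
      by (rule lowerL[OF fin nz sp R3])
    also have "\<dots> = (\<Sum>u\<in>I. (a \<bullet> nrm u)^2) + (\<Sum>u\<in>J. (a \<bullet> nrm u)^2)"
      unfolding part(1)[symmetric] by (rule sum.union_disjoint[OF finI part(2)])
    also have "\<dots> \<le> M * (norm (proj_span I a))^2 + M * (norm (proj_span J a))^2"
      by (rule add_mono[OF upperU[OF fin IO(1) Mp R4] upperU[OF fin IO(2) Mp R4]])
    finally show ?thesis .
  qed
  have main: "\<sigma> * fM A OPT \<le> M * (fM A I + fM A J)"
    unfolding fM_cols sum_distrib_left distrib_left sum.distrib[symmetric]
    by (rule sum_mono) (rule col)
  have "fM A OPT / (2 * kappa OPT) = (\<sigma> * fM A OPT) / (2 * M)" unfolding kap using sp Mp by (simp add: field_simps)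
  also have "\<dots> \<le> (M * (fM A I + fM A J)) / (2 * M)" using main Mp by (intro divide_right_mono) auto
  also have "\<dots> = (fM A I + fM A J) / 2" using Mp by simp
  also have "\<dots> \<le> fM A I + fM A J" using fM_nonneg[of A I] fM_nonneg[of A J] by simp
  finally show ?thesis .
qed


end
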